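(* Let $p_0,q\in\mathcal S^{d-1}$ with $p_0^\top q>0$, and consider the preference dynamics with the fixed recommendation $q_t=q$ for all $t\ge0$, i.e. $\tilde p_{t+1}=p_t+\eta_t\,(p_t^\top q)\,q$, $p_{t+1}=\tilde p_{t+1}/\|\tilde p_{t+1}\|_2$, with step sizes either constant ($\eta_t=\eta$) or decreasing ($\eta_t=\frac{\eta}{t+s}$). Let $R(T)=\sum_{t=0}^{T-1}(1-p_t^\top q)$. Then for every $T\ge 1$, \[R(T)\le C_\gamma\big((p_0^\top q)^{-2}-1\big),\qquad C_\gamma=\begin{cases}\frac{(\eta+1)^2}{\eta^2+2\eta}, & \eta_t=\eta,\\[2pt] \frac{s^2\pi^2}{6}, & \eta_t=\frac{\eta}{t+s}.\end{cases}\]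
   Context: $\mathcal S^{d-1}$ denotes the unit sphere in $\mathbb{R}^d$. In the constant step-size setting $\eta>0$ is a constant; in the decreasing step-size setting $\eta$ and $s$ are positive integers. $R(T)$ is the regret for the affinity reward $r_t=p_t^\top q_t$ relative to the maximal reward $1$. *)

theory Defs
  imports "HOL-Analysis.Analysis"
begin

fun pref_traj :: "(nat \<Rightarrow> real) \<Rightarrow> 'a::euclidean_space \<Rightarrow> 'a \<Rightarrow> nat \<Rightarrow> 'a" where
  "pref_traj eta q p0 0 = p0"
| "pref_traj eta q p0 (Suc t) =
     (let pt = pref_traj eta q p0 t;
          pt' = pt + (eta t * (pt \<bullet> q)) *\<^sub>R q
      in (1 / norm pt') *\<^sub>R pt')"

definition regret :: "(nat \<Rightarrow> real) \<Rightarrow> 'a::euclidean_space \<Rightarrow> 'a \<Rightarrow> nat \<Rightarrow> real" where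
  "regret eta q p0 T = (\<Sum>t<T. 1 - pref_traj eta q p0 t \<bullet> q)"

end

theory Submission
  imports Defs
begin

lemma step:
  fixes p q :: "'a::euclidean_space" and e :: real
  assumes "norm p = 1" "norm q = 1" "p \<bullet> q > 0" "e \<ge> 0"
  defines "p' \<equiv> p + (e * (p \<bullet> q)) *\<^sub>R q"
  shows "norm ((1 / norm p') *\<^sub>R p') = 1 \<and> ((1 / norm p') *\<^sub>R p') \<bullet> q > 0
    \<and> 1 / (((1 / norm p') *\<^sub>R p') \<bullet> q)^2 - 1 = (1 / (p \<bullet> q)^2 - 1) / (1 + e)^2"
proof -
  define c where "c = p \<bullet> q"
  have qq: "q \<bullet> q = 1" using assms(2) by (simp add: dot_square_norm)
  have pp: "p \<bullet> p = 1" using assms(1) by (simp add: dot_square_norm)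
  have c: "c > 0" using assms c_def by simp
  have p'q: "p' \<bullet> q = (1 + e) * c" unfolding p'_def c_def by (simp add: inner_add_left qq algebra_simps)
  have p'p': "p' \<bullet> p' = 1 + (e^2 + 2*e) * c^2" unfolding p'_def c_def
    by (simp add: inner_add_left inner_add_right qq pp inner_commute power2_eq_square algebra_simps)
  have np: "(norm p')^2 = 1 + (e^2 + 2*e) * c^2" using p'p' by (simp add: dot_square_norm)
  have npos: "norm p' > 0" using np c assms(4)
    by (metis add_pos_nonneg mult_nonneg_nonneg zero_less_one zero_le_power2 add_nonneg_nonneg mult_2 norm_ge_zero order_less_le power_zero_numeral zero_less_norm_iff norm_zero)
  have c': "((1 / norm p') *\<^sub>R p') \<bullet> q = (1 + e) * c / norm p'" using p'q by simp
  show ?thesis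
  proof (intro conjI)
    show "norm ((1 / norm p') *\<^sub>R p') = 1" using npos by simp
    show "((1 / norm p') *\<^sub>R p') \<bullet> q > 0" using c' c npos assms(4) by simp
    have "1 / ((1 + e) * c / norm p')^2 - 1 = ((norm p')^2 - (1+e)^2*c^2) / ((1+e)^2 * c^2)"
      using c npos assms(4) by (simp add: field_simps power_mult_distrib) (simp add: power2_eq_square algebra_simps)
    also have "\<dots> = (1 / c^2 - 1) / (1 + e)^2"
      unfolding np using c assms(4) by (simp add: field_simps power2_eq_square)
    finally have calc: "1 / ((1 + e) * c / norm p')^2 - 1 = (1 / c^2 - 1) / (1 + e)^2" .
    show "1 / (((1 / norm p') *\<^sub>R p') \<bullet> q)^2 - 1 = (1 / (p \<bullet> q)^2 - 1) / (1 + e)^2"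
      unfolding c' c_def[symmetric] by (rule calc)
  qed
qed


lemma traj:
  fixes p0 q :: "'a::euclidean_space" and eta :: "nat \<Rightarrow> real"
  assumes "norm p0 = 1" "norm q = 1" "p0 \<bullet> q > 0" "\<And>t. eta t \<ge> 0"
  shows "norm (pref_traj eta q p0 t) = 1 \<and> pref_traj eta q p0 t \<bullet> q > 0
    \<and> 1 / (pref_traj eta q p0 t \<bullet> q)^2 - 1 = (1 / (p0 \<bullet> q)^2 - 1) / (\<Prod>k<t. (1 + eta k)^2)"
proof (induction t)
  case 0
  then show ?case using assms by simp
next
  case (Suc t)
  have S: "norm ((1 / norm p') *\<^sub>R p') = 1 \<and> ((1 / norm p') *\<^sub>R p') \<bullet> q > 0
    \<and> 1 / (((1 / norm p') *\<^sub>R p') \<bullet> q)^2 - 1 = (1 / (pref_traj eta q p0 t \<bullet> q)^2 - 1) / (1 + eta t)^2"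
    if "p' = pref_traj eta q p0 t + (eta t * (pref_traj eta q p0 t \<bullet> q)) *\<^sub>R q" for p'
    using step[of "pref_traj eta q p0 t" q "eta t"] Suc.IH assms that by simp
  show ?case using S[OF refl] Suc.IH by (simp add: Let_def)
qed

lemma term_bound:
  fixes c :: real assumes "0 < c" "c \<le> 1" shows "1 - c \<le> 1 / c^2 - 1"
proof -
  have h: "c^2 \<le> 1 + c" using assms power_le_one[of c 2] by simp
  have "c^2 * (1 - c) \<le> (1 + c) * (1 - c)" using mult_right_mono[OF h, of "1-c"] assms by simp
  then have "c^2 * (1 - c) \<le> (1 - c) * (1 + c)" by (simp add: mult.commute)
  then show ?thesis using assms by (simp add: field_simps power2_eq_square)
qed

lemma regret_le:
  fixes p0 q :: "'a::euclidean_space" and eta :: "nat \<Rightarrow> real"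
  assumes "norm p0 = 1" "norm q = 1" "p0 \<bullet> q > 0" "\<And>t. eta t \<ge> 0"
  shows "regret eta q p0 T \<le> (\<Sum>t<T. (1 / (p0 \<bullet> q)^2 - 1) / (\<Prod>k<t. (1 + eta k)^2))"
  unfolding regret_def
proof (rule sum_mono)
  fix t
  have tr: "norm (pref_traj eta q p0 t) = 1 \<and> pref_traj eta q p0 t \<bullet> q > 0
    \<and> 1 / (pref_traj eta q p0 t \<bullet> q)^2 - 1 = (1 / (p0 \<bullet> q)^2 - 1) / (\<Prod>k<t. (1 + eta k)^2)"
    using traj[OF assms] .
  have "pref_traj eta q p0 t \<bullet> q \<le> 1"
    using norm_cauchy_schwarz[of "pref_traj eta q p0 t" q] tr assms(2) by simp
  then show "1 - pref_traj eta q p0 t \<bullet> q \<le> (1 / (p0 \<bullet> q)^2 - 1) / (\<Prod>k<t. (1 + eta k)^2)"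
    using term_bound[of "pref_traj eta q p0 t \<bullet> q"] tr by simp
qed

lemma x0_nonneg:
  fixes p0 q :: "'a::euclidean_space"
  assumes "norm p0 = 1" "norm q = 1" "p0 \<bullet> q > 0"
  shows "0 \<le> 1 / (p0 \<bullet> q)^2 - 1"
proof -
  have "p0 \<bullet> q \<le> 1" using norm_cauchy_schwarz[of p0 q] assms by simp
  then have "(p0 \<bullet> q)^2 \<le> 1" using assms(3) by (simp add: power_le_one)
  then show ?thesis using assms(3) by (simp add: field_simps)
qed

lemma const_case:
  fixes p0 q :: "'a::euclidean_space" and eta :: real
  assumes "norm p0 = 1" "norm q = 1" "p0 \<bullet> q > 0" "eta > 0"
  shows "regret (\<lambda>_. eta) q p0 T \<le> ((eta + 1)^2 / (eta^2 + 2 * eta)) * (1 / (p0 \<bullet> q)^2 - 1)"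
proof -
  define x where "x = 1 / (p0 \<bullet> q)^2 - 1"
  define r where "r = 1 / (1 + eta)^2"
  have x: "x \<ge> 0" using x0_nonneg[OF assms(1-3)] x_def by simp
  have h: "1 < (1+eta)^2" using one_less_power[of "1+eta" 2] assms(4) by simp
  have r: "0 < r" "r < 1" unfolding r_def using h by (auto simp: divide_less_eq)
  have A: "regret (\<lambda>_. eta) q p0 T \<le> (\<Sum>t<T. x / (\<Prod>k<t. (1 + eta)^2))"
    using regret_le[of p0 q "\<lambda>_. eta" T] assms x_def by simp
  have B: "(\<Sum>t<T. x / (\<Prod>k<t. (1 + eta)^2)) = x * (\<Sum>t<T. r^t)"
    by (simp add: sum_distrib_left r_def power_one_over field_simps)
  have C: "(\<Sum>t<T. r^t) = (1 - r^T) / (1 - r)" using r by (simp add: sum_gp_strict)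
  have D: "(1 - r^T) / (1 - r) \<le> 1 / (1 - r)" using r by (simp add: divide_right_mono)
  have E: "1 / (1 - r) = (eta + 1)^2 / (eta^2 + 2 * eta)"
  proof -
    have a: "1 - r = ((1+eta)^2 - 1)/(1+eta)^2" unfolding r_def using h assms(4) by (simp add: diff_divide_distrib)
    have b: "(1+eta)^2 - 1 = eta^2+2*eta" by (simp add: power2_eq_square algebra_simps)
    show ?thesis unfolding a b by (simp add: add.commute)
  qed
  have "x * (\<Sum>t<T. r^t) \<le> x * ((eta + 1)^2 / (eta^2 + 2 * eta))"
    using C D E x by (metis mult_left_mono)
  then show ?thesis using A B x_def by (simp add: mult.commute)
qed

lemma prod_lb:
  fixes eta s :: nat assumes "eta > 0" "s > 0"
  shows "(\<Prod>k<t. 1 + real eta / real (k + s)) \<ge> real (t + s) / real s"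
proof (induction t)
  case 0 then show ?case using assms by simp
next
  case (Suc t)
  have ts: "real t + real s > 0" using assms by simp
  have pn: "0 \<le> (\<Prod>k<t. 1 + real eta / real (k+s))" by (intro prod_nonneg) auto
  have e1: "(real t + real s) * (1 + 1/(real t + real s)) = real t + real s + 1"
    using ts by (simp add: distrib_left)
  have e2: "real (Suc t + s) = real (t+s) * (1 + 1/real(t+s))" using e1 by simp
  have "real (Suc t + s) / real s = real (t + s) / real s * (1 + 1 / real (t + s))"
    unfolding e2 by simp
  also have "\<dots> \<le> (\<Prod>k<t. 1 + real eta / real (k + s)) * (1 + real eta / real (t + s))"
    using Suc.IH assms pn by (intro mult_mono) (auto simp: divide_right_mono)
  finally show ?case by simp
qed

lemma dec_case:
  fixes p0 q :: "'a::euclidean_space" and eta s :: nat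
  assumes "norm p0 = 1" "norm q = 1" "p0 \<bullet> q > 0" "eta > 0" "s > 0"
  shows "regret (\<lambda>t. real eta / real (t + s)) q p0 T \<le> (real s ^ 2 * pi ^ 2 / 6) * (1 / (p0 \<bullet> q)^2 - 1)"
proof -
  define x where "x = 1 / (p0 \<bullet> q)^2 - 1"
  have x: "x \<ge> 0" using x0_nonneg[OF assms(1-3)] x_def by simp
  have "regret (\<lambda>t. real eta / real (t + s)) q p0 T
      \<le> (\<Sum>t<T. x / (\<Prod>k<t. (1 + real eta / real (k + s))^2))"
    using regret_le[of p0 q "\<lambda>t. real eta / real (t + s)" T] assms x_def by simp
  also have "\<dots> \<le> (\<Sum>t<T. x * real s ^ 2 * (1 / (real t + 1)^2))"
  proof (rule sum_mono)
    fix t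
    have P: "(\<Prod>k<t. (1 + real eta / real (k + s))^2) = (\<Prod>k<t. 1 + real eta / real (k + s))^2"
      by (simp add: prod_power_distrib)
    have lb: "(real (t + s) / real s)^2 \<le> (\<Prod>k<t. 1 + real eta / real (k + s))^2"
      using prod_lb[OF assms(4,5), of t] assms(5) by (intro power_mono) auto
    have lb2: "(real t + 1)^2 / (real s)^2 \<le> (real (t + s) / real s)^2"
      using assms(5) by (simp add: power_divide divide_right_mono power_mono)
    have pos: "0 < (real t + 1)^2 / (real s)^2" using assms(5) by simp
    have ppos: "0 < (\<Prod>k<t. 1 + real eta / real (k + s))" by (intro prod_pos) (auto simp: add_pos_nonneg)
    have D: "(real t + 1)^2 / (real s)^2 \<le> (\<Prod>k<t. 1 + real eta / real (k + s))^2"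
      using lb lb2 by linarith
    have pp2: "0 < (\<Prod>k<t. 1 + real eta / real (k + s))^2" using ppos by (rule zero_less_power)
    have "x / (\<Prod>k<t. (1 + real eta / real (k + s))^2) \<le> x / ((real t + 1)^2 / (real s)^2)"
      unfolding P by (rule divide_left_mono[OF D x mult_pos_pos[OF pp2 pos]])
    also have "\<dots> = x * real s ^ 2 * (1 / (real t + 1)^2)" by simp
    finally show "x / (\<Prod>k<t. (1 + real eta / real (k + s))^2) \<le> x * real s ^ 2 * (1 / (real t + 1)^2)" .
  qed
  also have "\<dots> = x * real s ^ 2 * (\<Sum>t<T. 1 / (real t + 1)^2)" by (simp add: sum_distrib_left)
  also have "(\<Sum>t<T. 1 / (real t + 1)^2) \<le> pi^2 / 6"
  proof -
    have "(\<Sum>t<T. 1 / (real t + 1)^2) \<le> (\<Sum>n. 1 / (real n + 1)^2)"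
    proof (rule sum_le_suminf)
      show "summable (\<lambda>n. 1 / (real n + 1)^2)"
        using sums_summable[OF inverse_squares_sums] by (simp add: add.commute)
    qed auto
    moreover have "(\<Sum>n. 1 / (real n + 1)^2) = pi^2/6"
      using sums_unique[OF inverse_squares_sums] by (simp add: add.commute)
    ultimately show ?thesis by simp
  qed
  then have "x * real s ^ 2 * (\<Sum>t<T. 1 / (real t + 1)^2) \<le> x * real s ^ 2 * (pi^2 / 6)"
    using x by (intro mult_left_mono) auto
  finally show ?thesis using x_def by (simp add: field_simps)
qed

theorem proposition2:
  fixes p0 q :: "'a::euclidean_space" and T :: nat
  assumes "norm p0 = 1" and "norm q = 1" and "p0 \<bullet> q > 0" and "T \<ge> 1"
  shows "(\<forall>eta::real. eta > 0 \<longrightarrow>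
            regret (\<lambda>_. eta) q p0 T
              \<le> ((eta + 1)^2 / (eta^2 + 2 * eta)) * (1 / (p0 \<bullet> q)^2 - 1))
       \<and> (\<forall>eta s :: nat. eta > 0 \<longrightarrow> s > 0 \<longrightarrow>
            regret (\<lambda>t. real eta / real (t + s)) q p0 T
              \<le> (real s ^ 2 * pi ^ 2 / 6) * (1 / (p0 \<bullet> q)^2 - 1))"
  using const_case[OF assms(1-3)] dec_case[OF assms(1-3)] by blast

end
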